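(* Let $\mathcal{D}=\{1,\ldots,d^{\max}\}$, $m_d>0$ with $\sum_d m_d=1$, $d^{\mathtt{avg}}=\sum_d d\,m_d$, $\alpha,\gamma\in(0,1)$, $\beta_\mathtt{P}^d\in(0,1)$, and $c_\mathtt{P},L>0$. For $\mathbf{y}=(y^d)_{d\in\mathcal{D}}\in[0,1]^{d^{\max}}$ let $\Theta(\mathbf{y}):=\sum_{d\in\mathcal{D}}\frac{d m_d}{d^{\mathtt{avg}}}\beta_\mathtt{P}^d y^d$, and define thresholds $\Theta^d_{th}:=\frac{c_\mathtt{P}}{L(1-\alpha)d}$ for $d\in\mathcal{D}$, with $\Theta^{d^{\max}+1}_{th}:=0$. Assume there is a degree $d$ with $\Theta^d_{th}<1$ and let $d_{\min}$ be the smallest such degree. Define the intervals $\mathcal{I}_{d^{\max}+1}:=[0,\Theta^{d^{\max}}_{th})$, $\mathcal{I}_{d_{\min}}:=(\Theta^{d_{\min}}_{th},1]$, and $\mathcal{I}_d:=(\Theta^d_{th},\Theta^{d-1}_{th})$ for $d\in\{d_{\min}+1,\ldots,d^{\max}\}$. Call $\mathbf{y}\in[0,1]^{d^{\max}}$ an equilibrium of the switched dynamics if for every $d\in\mathcal{D}$ there exists $z^d_{\mathtt{S}}\in[0,1]$ with $z^d_{\mathtt{S}}=1$ if $\Theta(\mathbf{y})<\Theta^d_{th}$, $z^d_{\mathtt{S}}=0$ if $\Theta(\mathbf{y})>\Theta^d_{th}$ (and $z^d_{\mathtt{S}}$ arbitrary in $[0,1]$ if $\Theta(\mathbf{y})=\Theta^d_{th}$),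 such that $$0=-\gamma y^d+(1-y^d)\big(z^d_{\mathtt{S}}+\alpha(1-z^d_{\mathtt{S}})\big)\,d\,\Theta(\mathbf{y}).$$ An endemic equilibrium is a nonzero equilibrium; $\mathbf{y}=0$ is the disease-free equilibrium. Let $\mathcal{R}(d^\star)$ and $\Theta_{\mathtt{EE}}(d^\star)$ (for $d^\star\in\{1,\ldots,d^{\max}+1\}$) be as defined in the context, and let $\mathbf{y}_{\mathtt{EE}}(d^\star)$ denote the corresponding endemic equilibrium of the fixed-$d^\star$ dynamics when $\mathcal{R}(d^\star)>1$. Then: (1) If $\mathcal{R}(d^{\max}+1)\le 1$, the disease-free equilibrium is the only equilibrium of the switched dynamics. (2) Suppose $\mathcal{R}(d^{\max}+1)>1$, and let $d^{\mathtt{eq}}$ be the smallest element of $\{d_{\min},\ldots,d^{\max}+1\}$ with $\Theta_{\mathtt{EE}}(d^{\mathtt{eq}})>\Theta^{d^{\mathtt{eq}}}_{th}$. (a) If $\Theta_{\mathtt{EE}}(d^{\mathtt{eq}})\in\mathcal{I}_{d^{\mathtt{eq}}}$, then $\mathbf{y}_{\mathtt{EE}}(d^{\mathtt{eq}})$ is the unique endemic equilibrium of the switched dynamics. (b) If $\Theta_{\mathtt{EE}}(d^{\mathtt{eq}})\ge\Theta^{d^{\mathtt{eq}}-1}_{th}$, then the switched dynamics has a unique endemic equilibrium; it satisfies $\Theta(\mathbf{y})=\Theta^{d^{\mathtt{eq}}-1}_{th}$ and $y^d=\frac{s_d\,d\,\Theta^{d^{\mathtt{eq}}-1}_{th}}{\gamma+s_d\,d\,\Theta^{d^{\mathtt{eq}}-1}_{th}}$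 for all $d$, where $s_d=1$ for $d<d^{\mathtt{eq}}-1$, $s_d=\alpha$ for $d>d^{\mathtt{eq}}-1$, and $s_{d^{\mathtt{eq}}-1}=\bar z+\alpha(1-\bar z)$ for some $\bar z\in[0,1]$.
   Context: For $d^\star\in\{1,\ldots,d^{\max}+1\}$: $$\mathcal{R}(d^\star):=\sum_{d=1}^{d^\star-1}\frac{d^2 m_d\beta_\mathtt{P}^d}{d^{\mathtt{avg}}\gamma}+\sum_{d=d^\star}^{d^{\max}}\frac{\alpha\, d^2 m_d\beta_\mathtt{P}^d}{d^{\mathtt{avg}}\gamma}.$$ The fixed-$d^\star$ dynamics is $\dot y^d=-\gamma y^d+(1-y^d)\kappa_d\,d\,\Theta(\mathbf{y})$ with $\kappa_d=1$ for $d<d^\star$ and $\kappa_d=\alpha$ for $d\ge d^\star$; when $\mathcal{R}(d^\star)>1$ it has a unique nonzero equilibrium $\mathbf{y}_{\mathtt{EE}}(d^\star)\in[0,1]^{d^{\max}}$. $\Theta_{\mathtt{EE}}(d^\star):=\Theta(\mathbf{y}_{\mathtt{EE}}(d^\star))$ if $\mathcal{R}(d^\star)>1$, which is the unique $\Theta>0$ with $1=\sum_{d<d^\star}\frac{d m_d}{d^{\mathtt{avg}}}\frac{d\beta_\mathtt{P}^d}{\gamma+d\Theta}+\sum_{d\ge d^\star}\frac{d m_d}{d^{\mathtt{avg}}}\frac{\alpha d\beta_\mathtt{P}^d}{\gamma+\alpha d\Theta}$; and $\Theta_{\mathtt{EE}}(d^\star):=0$ if $\mathcal{R}(d^\star)\le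 1$. The switched dynamics models the SIS epidemic when susceptible agents of degree $d$ adopt protection (reducing infection probability by factor $\alpha$) exactly when $\Theta(\mathbf{y})$ exceeds $\Theta^d_{th}$, and infected agents always adopt protection (transmission rate $\beta_\mathtt{P}^d$). *)

theory Defs
  imports Main "HOL.Real"
begin

text \<open>State vectors y are functions nat => real that are
  zero outside D (so that equality of vectors is equality on D).\<close>

definition davg :: "nat \<Rightarrow> (nat \<Rightarrow> real) \<Rightarrow> real" where
  "davg dmax m = (\<Sum>d=1..dmax. real d * m d)"

definition Theta :: "nat \<Rightarrow> (nat \<Rightarrow> real) \<Rightarrow> (nat \<Rightarrow> real) \<Rightarrow> (nat \<Rightarrow> real) \<Rightarrow> real" where
  "Theta dmax m beta y = (\<Sum>d=1..dmax. real d * m d / davg dmax m * beta d * y d)"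

definition th :: "nat \<Rightarrow> real \<Rightarrow> real \<Rightarrow> real \<Rightarrow> nat \<Rightarrow> real" where
  "th dmax alpha cP L d = (if d = dmax + 1 then 0 else cP / (L * (1 - alpha) * real d))"

definition dmin :: "nat \<Rightarrow> real \<Rightarrow> real \<Rightarrow> real \<Rightarrow> nat" where
  "dmin dmax alpha cP L = (LEAST d. 1 \<le> d \<and> d \<le> dmax \<and> th dmax alpha cP L d < 1)"

definition Ival :: "nat \<Rightarrow> real \<Rightarrow> real \<Rightarrow> real \<Rightarrow> nat \<Rightarrow> real set" where
  "Ival dmax alpha cP L d =
     (if d = dmax + 1 then {0 ..< th dmax alpha cP L dmax}
      else if d = dmin dmax alpha cP L then {th dmax alpha cP L d <.. 1}
      else {th dmax alpha cP L d <..< th dmax alpha cP L (d - 1)})"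

definition box :: "nat \<Rightarrow> (nat \<Rightarrow> real) set" where
  "box dmax = {y. (\<forall>d\<in>{1..dmax}. 0 \<le> y d \<and> y d \<le> 1) \<and> (\<forall>d. d \<notin> {1..dmax} \<longrightarrow> y d = 0)}"

definition Rnum :: "nat \<Rightarrow> (nat \<Rightarrow> real) \<Rightarrow> (nat \<Rightarrow> real) \<Rightarrow> real \<Rightarrow> real \<Rightarrow> nat \<Rightarrow> real" where
  "Rnum dmax m beta alpha gamma ds =
     (\<Sum>d=1..ds - 1. (real d)^2 * m d * beta d / (davg dmax m * gamma))
   + (\<Sum>d=ds..dmax. alpha * (real d)^2 * m d * beta d / (davg dmax m * gamma))"

definition ThetaEE :: "nat \<Rightarrow> (nat \<Rightarrow> real) \<Rightarrow> (nat \<Rightarrow> real) \<Rightarrow> real \<Rightarrow> real \<Rightarrow> nat \<Rightarrow> real" where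
  "ThetaEE dmax m beta alpha gamma ds =
     (if Rnum dmax m beta alpha gamma ds > 1 then
        (THE T. T > 0 \<and>
          1 = (\<Sum>d=1..ds - 1. real d * m d / davg dmax m * (real d * beta d / (gamma + real d * T)))
            + (\<Sum>d=ds..dmax. real d * m d / davg dmax m * (alpha * real d * beta d / (gamma + alpha * real d * T))))
      else 0)"

definition kappa :: "real \<Rightarrow> nat \<Rightarrow> nat \<Rightarrow> real" where
  "kappa alpha ds d = (if d < ds then 1 else alpha)"

definition fixed_eq :: "nat \<Rightarrow> (nat \<Rightarrow> real) \<Rightarrow> (nat \<Rightarrow> real) \<Rightarrow> real \<Rightarrow> real \<Rightarrow> nat \<Rightarrow> (nat \<Rightarrow> real) \<Rightarrow> bool" where
  "fixed_eq dmax m beta alpha gamma ds y \<longleftrightarrow> y \<in> box dmax \<and>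
     (\<forall>d\<in>{1..dmax}. 0 = - gamma * y d + (1 - y d) * kappa alpha ds d * real d * Theta dmax m beta y)"

definition yEE :: "nat \<Rightarrow> (nat \<Rightarrow> real) \<Rightarrow> (nat \<Rightarrow> real) \<Rightarrow> real \<Rightarrow> real \<Rightarrow> nat \<Rightarrow> (nat \<Rightarrow> real)" where
  "yEE dmax m beta alpha gamma ds = (THE y. fixed_eq dmax m beta alpha gamma ds y \<and> y \<noteq> (\<lambda>_. 0))"

definition sw_eq :: "nat \<Rightarrow> (nat \<Rightarrow> real) \<Rightarrow> (nat \<Rightarrow> real) \<Rightarrow> real \<Rightarrow> real \<Rightarrow> real \<Rightarrow> real \<Rightarrow> (nat \<Rightarrow> real) \<Rightarrow> bool" where
  "sw_eq dmax m beta alpha gamma cP L y \<longleftrightarrow> y \<in> box dmax \<and>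
     (\<forall>d\<in>{1..dmax}. \<exists>z. 0 \<le> z \<and> z \<le> 1 \<and>
        (Theta dmax m beta y < th dmax alpha cP L d \<longrightarrow> z = 1) \<and>
        (Theta dmax m beta y > th dmax alpha cP L d \<longrightarrow> z = 0) \<and>
        0 = - gamma * y d + (1 - y d) * (z + alpha * (1 - z)) * real d * Theta dmax m beta y)"

definition endemic_eq :: "nat \<Rightarrow> (nat \<Rightarrow> real) \<Rightarrow> (nat \<Rightarrow> real) \<Rightarrow> real \<Rightarrow> real \<Rightarrow> real \<Rightarrow> real \<Rightarrow> (nat \<Rightarrow> real) \<Rightarrow> bool" where
  "endemic_eq dmax m beta alpha gamma cP L y \<longleftrightarrow> sw_eq dmax m beta alpha gamma cP L y \<and> y \<noteq> (\<lambda>_. 0)"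

definition deq :: "nat \<Rightarrow> (nat \<Rightarrow> real) \<Rightarrow> (nat \<Rightarrow> real) \<Rightarrow> real \<Rightarrow> real \<Rightarrow> real \<Rightarrow> real \<Rightarrow> nat" where
  "deq dmax m beta alpha gamma cP L =
     (LEAST d. dmin dmax alpha cP L \<le> d \<and> d \<le> dmax + 1 \<and>
        ThetaEE dmax m beta alpha gamma d > th dmax alpha cP L d)"

end

theory Submission imports Defs Complex_Main begin

lemma frac_mono:
  fixes a a' g t t' :: real
  assumes "0 < a'" "a' \<le> a" "0 \<le> t" "t \<le> t'" "0 < g"
  shows "a' / (g + a' * t') \<le> a / (g + a * t)"
proof -
  have p1: "g + a' * t' > 0" "g + a * t > 0" using assms by (auto intro: add_pos_nonneg)
  have "a' * (g + a * t) \<le> a * (g + a' * t')"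
  proof -
    have "a' * g \<le> a * g" using assms by simp
    moreover have "a' * a * t \<le> a' * a * t'" using assms by (intro mult_left_mono) auto
    ultimately show ?thesis by (simp add: algebra_simps)
  qed
  thus ?thesis using p1 by (simp add: divide_simps)
qed

lemma frac_strict:
  fixes a a' g t t' :: real
  assumes "0 < a'" "a' \<le> a" "0 \<le> t" "t < t'" "0 < g"
  shows "a' / (g + a' * t') < a / (g + a * t)"
proof -
  have p1: "g + a' * t' > 0" "g + a * t > 0" using assms by (auto intro: add_pos_nonneg)
  have "a' * (g + a * t) < a * (g + a' * t')"
  proof -
    have "a' * g \<le> a * g" using assms by simp
    moreover have "a' * a * t < a' * a * t'" using assms by (intro mult_strict_left_mono) auto
    ultimately show ?thesis by (simp add: algebra_simps)
  qed
  thus ?thesis using p1 by (simp add: divide_simps)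
qed

lemma eq_solve:
  fixes y c g :: real
  assumes "0 < g" "0 \<le> c"
  shows "(0 = - g * y + (1 - y) * c) \<longleftrightarrow> y = c / (g + c)"
proof -
  have "g + c > 0" using assms by simp
  thus ?thesis by (auto simp: field_simps)
qed

locale SIS =
  fixes dmax :: nat and m beta :: "nat \<Rightarrow> real" and alpha gamma cP L :: real
  assumes dmax1: "dmax \<ge> 1"
    and mpos: "\<forall>d\<in>{1..dmax}. m d > 0"
    and msum: "(\<Sum>d=1..dmax. m d) = 1"
    and a0: "0 < alpha" and a1: "alpha < 1" and g0: "0 < gamma" and g1: "gamma < 1"
    and bb: "\<forall>d\<in>{1..dmax}. 0 < beta d \<and> beta d < 1"
    and cP0: "cP > 0" and L0: "L > 0"
    and exth: "\<exists>d\<in>{1..dmax}. th dmax alpha cP L d < 1"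
begin

definition w :: "nat \<Rightarrow> real" where "w d = real d * m d / davg dmax m"
definition G :: "(nat \<Rightarrow> real) \<Rightarrow> real \<Rightarrow> real" where
  "G s t = (\<Sum>d=1..dmax. w d * (s d * real d * beta d / (gamma + s d * real d * t)))"
definition Y :: "(nat \<Rightarrow> real) \<Rightarrow> real \<Rightarrow> nat \<Rightarrow> real" where
  "Y s t = (\<lambda>d. if d \<in> {1..dmax} then s d * real d * t / (gamma + s d * real d * t) else 0)"
definition cons :: "(nat \<Rightarrow> real) \<Rightarrow> real \<Rightarrow> bool" where
  "cons s t \<longleftrightarrow> (\<forall>d\<in>{1..dmax}. alpha \<le> s d \<and> s d \<le> 1 \<and>
      (t < th dmax alpha cP L d \<longrightarrow> s d = 1) \<and> (t > th dmax alpha cP L d \<longrightarrow> s d = alpha))"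

abbreviation "TH \<equiv> th dmax alpha cP L"
abbreviation "Th \<equiv> Theta dmax m beta"

lemma davg_pos: "davg dmax m > 0"
proof -
  have "(\<Sum>d=1..dmax. real d * m d) > 0"
    using dmax1 mpos by (intro sum_pos) auto
  thus ?thesis by (simp add: davg_def)
qed

lemma w_pos: "d \<in> {1..dmax} \<Longrightarrow> w d > 0"
  using davg_pos mpos by (auto simp: w_def)

lemma w_sum: "(\<Sum>d=1..dmax. w d) = 1"
  using davg_pos by (simp add: w_def davg_def sum_divide_distrib[symmetric])

lemma Theta_w: "Th y = (\<Sum>d=1..dmax. w d * beta d * y d)"
  by (simp add: Theta_def w_def)

lemma th_nonneg: "TH d \<ge> 0"
  using cP0 L0 a1 by (auto simp: th_def)

lemma th_pos: "d \<in> {1..dmax} \<Longrightarrow> TH d > 0"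
  using cP0 L0 a1 by (auto simp: th_def)

lemma th_strict: "1 \<le> d \<Longrightarrow> d < d' \<Longrightarrow> d' \<le> dmax + 1 \<Longrightarrow> TH d' < TH d"
proof -
  assume h: "1 \<le> d" "d < d'" "d' \<le> dmax + 1"
  show ?thesis
  proof (cases "d' = dmax + 1")
    case True thus ?thesis using th_pos[of d] h by (simp add: th_def)
  next
    case False
    have p: "L * (1 - alpha) > 0" using L0 a1 by simp
    have "L * (1 - alpha) * real d < L * (1 - alpha) * real d'" using p h by (intro mult_strict_left_mono) auto
    moreover have "L * (1 - alpha) * real d > 0" using p h by simp
    ultimately show ?thesis using False h cP0
      by (simp add: th_def divide_strict_left_mono)
  qed
qed

lemma th_mono: "1 \<le> d \<Longrightarrow> d \<le> d' \<Longrightarrow> d' \<le> dmax + 1 \<Longrightarrow> TH d' \<le> TH d"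
  using th_strict by (cases "d = d'") (auto intro: less_imp_le)

lemma dmin_props:
  "dmin dmax alpha cP L \<in> {1..dmax}" "TH (dmin dmax alpha cP L) < 1"
  "\<And>d. d < dmin dmax alpha cP L \<Longrightarrow> d \<ge> 1 \<Longrightarrow> TH d \<ge> 1"
proof -
  have ex: "\<exists>d. 1 \<le> d \<and> d \<le> dmax \<and> TH d < 1" using exth by auto
  from LeastI_ex[OF ex] show "dmin dmax alpha cP L \<in> {1..dmax}" "TH (dmin dmax alpha cP L) < 1"
    by (auto simp: dmin_def)
  fix d assume "d < dmin dmax alpha cP L" "d \<ge> 1"
  with not_less_Least[of d "\<lambda>d. 1 \<le> d \<and> d \<le> dmax \<and> TH d < 1"]
    LeastI_ex[OF ex]
  show "TH d \<ge> 1" by (auto simp: dmin_def)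
qed


lemma split_sum:
  assumes "1 \<le> ds" "ds \<le> dmax + 1"
  shows "(\<Sum>d=1..ds - 1. f d 1) + (\<Sum>d=ds..dmax. f d alpha) = (\<Sum>d=1..dmax. f d (kappa alpha ds d))"
proof -
  have U: "{1..dmax} = {1..ds-1} \<union> {ds..dmax}" using assms by auto
  have D: "{1..ds-1} \<inter> {ds..dmax} = {}" using assms by auto
  have "(\<Sum>d=1..dmax. f d (kappa alpha ds d)) =
      (\<Sum>d=1..ds-1. f d (kappa alpha ds d)) + (\<Sum>d=ds..dmax. f d (kappa alpha ds d))"
    unfolding U by (rule sum.union_disjoint) (use D in auto)
  also have "(\<Sum>d=1..ds-1. f d (kappa alpha ds d)) = (\<Sum>d=1..ds-1. f d 1)"
    using assms by (intro sum.cong) (auto simp: kappa_def)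
  also have "(\<Sum>d=ds..dmax. f d (kappa alpha ds d)) = (\<Sum>d=ds..dmax. f d alpha)"
    by (intro sum.cong) (auto simp: kappa_def)
  finally show ?thesis by simp
qed

lemma kappa_range: "alpha \<le> kappa alpha ds d" "kappa alpha ds d \<le> 1"
  using a1 by (auto simp: kappa_def)

lemma Rnum_G:
  assumes "1 \<le> ds" "ds \<le> dmax + 1"
  shows "Rnum dmax m beta alpha gamma ds = G (kappa alpha ds) 0"
proof -
  have "Rnum dmax m beta alpha gamma ds =
    (\<Sum>d=1..ds - 1. (\<lambda>d k. k * (real d)^2 * m d * beta d / (davg dmax m * gamma)) d 1)
    + (\<Sum>d=ds..dmax. (\<lambda>d k. k * (real d)^2 * m d * beta d / (davg dmax m * gamma)) d alpha)"
    by (simp add: Rnum_def)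
  also have "\<dots> = (\<Sum>d=1..dmax. kappa alpha ds d * (real d)^2 * m d * beta d / (davg dmax m * gamma))"
    by (rule split_sum[OF assms])
  also have "\<dots> = G (kappa alpha ds) 0"
    unfolding G_def w_def by (intro sum.cong) (auto simp: power2_eq_square)
  finally show ?thesis .
qed

lemma EEsum_G:
  assumes "1 \<le> ds" "ds \<le> dmax + 1"
  shows "(\<Sum>d=1..ds - 1. real d * m d / davg dmax m * (real d * beta d / (gamma + real d * T)))
            + (\<Sum>d=ds..dmax. real d * m d / davg dmax m * (alpha * real d * beta d / (gamma + alpha * real d * T)))
    = G (kappa alpha ds) T"
proof -
  have "(\<Sum>d=1..ds - 1. real d * m d / davg dmax m * (real d * beta d / (gamma + real d * T)))
            + (\<Sum>d=ds..dmax. real d * m d / davg dmax m * (alpha * real d * beta d / (gamma + alpha * real d * T)))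
    = (\<Sum>d=1..ds - 1. (\<lambda>d k. w d * (k * real d * beta d / (gamma + k * real d * T))) d 1)
    + (\<Sum>d=ds..dmax. (\<lambda>d k. w d * (k * real d * beta d / (gamma + k * real d * T))) d alpha)"
    by (simp add: w_def)
  also have "\<dots> = G (kappa alpha ds) T"
    unfolding G_def by (rule split_sum[OF assms])
  finally show ?thesis .
qed

lemma G_mono:
  assumes "\<forall>d\<in>{1..dmax}. 0 < s' d \<and> s' d \<le> s d" "0 \<le> t" "t \<le> t'"
  shows "G s' t' \<le> G s t"
  unfolding G_def
proof (rule sum_mono)
  fix d assume d: "d \<in> {1..dmax}"
  have "s' d * real d * beta d / (gamma + s' d * real d * t') = beta d * ((s' d * real d) / (gamma + (s' d * real d) * t'))"
    by simp
  also have "\<dots> \<le> beta d * ((s d * real d) / (gamma + (s d * real d) * t))"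
    using assms d bb g0 by (intro mult_left_mono frac_mono) (auto intro: mult_right_mono less_imp_le)
  also have "\<dots> = s d * real d * beta d / (gamma + s d * real d * t)" by simp
  finally show "w d * (s' d * real d * beta d / (gamma + s' d * real d * t')) \<le>
        w d * (s d * real d * beta d / (gamma + s d * real d * t))"
    using w_pos[OF d] by (intro mult_left_mono) auto
qed

lemma G_strict:
  assumes "\<forall>d\<in>{1..dmax}. 0 < s' d \<and> s' d \<le> s d" "0 \<le> t" "t < t'"
  shows "G s' t' < G s t"
  unfolding G_def
proof (rule sum_strict_mono)
  show "finite {1..dmax}" by simp
  show "{1..dmax} \<noteq> {}" using dmax1 by simp
  fix d assume d: "d \<in> {1..dmax}"
  have "s' d * real d * beta d / (gamma + s' d * real d * t') = beta d * ((s' d * real d) / (gamma + (s' d * real d) * t'))"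
    by simp
  also have "\<dots> < beta d * ((s d * real d) / (gamma + (s d * real d) * t))"
    using assms d bb g0 by (intro mult_strict_left_mono frac_strict) (auto intro: mult_right_mono)
  also have "\<dots> = s d * real d * beta d / (gamma + s d * real d * t)" by simp
  finally show "w d * (s' d * real d * beta d / (gamma + s' d * real d * t')) <
        w d * (s d * real d * beta d / (gamma + s d * real d * t))"
    using w_pos[OF d] by (intro mult_strict_left_mono) auto
qed

lemma G_one:
  assumes "\<forall>d\<in>{1..dmax}. 0 < s d"
  shows "G s 1 < 1"
proof -
  have "G s 1 < (\<Sum>d=1..dmax. w d * beta d)"
    unfolding G_def
  proof (rule sum_strict_mono)
    show "finite {1..dmax}" by simp
    show "{1..dmax} \<noteq> {}" using dmax1 by simp
    fix d assume d: "d \<in> {1..dmax}"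
    have a: "s d * real d > 0" using assms d by auto
    have "s d * real d * beta d / (gamma + s d * real d * 1) < beta d"
      using a g0 bb d by (simp add: divide_simps algebra_simps)
    thus "w d * (s d * real d * beta d / (gamma + s d * real d * 1)) < w d * beta d"
      using w_pos[OF d] by (intro mult_strict_left_mono) auto
  qed
  also have "\<dots> \<le> (\<Sum>d=1..dmax. w d)"
    using bb w_pos by (intro sum_mono) (auto intro: less_imp_le)
  finally show ?thesis using w_sum by simp
qed

lemma G_cont:
  assumes "\<forall>d\<in>{1..dmax}. 0 < s d"
  shows "continuous_on {0..1} (G s)"
  unfolding G_def
  apply (intro continuous_intros)
  apply (auto simp del: of_nat_Suc)
proof -
  fix d x assume h: "Suc 0 \<le> d" "d \<le> dmax" "gamma + s d * real d * x = 0" "0 \<le> x"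
  hence "s d > 0" using assms by auto
  hence "s d * real d * x \<ge> 0" using h by auto
  thus False using g0 h by linarith
qed


lemma nn3: "0 < (a::real) \<Longrightarrow> 0 \<le> t \<Longrightarrow> 0 \<le> a * real d * t" by simp

lemma kappa_pos: "\<forall>d\<in>{1..dmax}. 0 < kappa alpha ds d \<and> kappa alpha ds d \<le> kappa alpha ds d"
  using a0 by (auto simp: kappa_def)

lemma G_unique:
  assumes "\<forall>d\<in>{1..dmax}. 0 < s d" "T1 > 0" "T2 > 0" "G s T1 = 1" "G s T2 = 1"
  shows "T1 = T2"
proof (rule ccontr)
  assume "T1 \<noteq> T2"
  hence "T1 < T2 \<or> T2 < T1" by auto
  thus False
  proof
    assume "T1 < T2" hence "G s T2 < G s T1" using assms by (intro G_strict) auto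
    thus False using assms by simp
  next
    assume "T2 < T1" hence "G s T1 < G s T2" using assms by (intro G_strict) auto
    thus False using assms by simp
  qed
qed

lemma ThetaEE_alt:
  assumes "1 \<le> ds" "ds \<le> dmax + 1" "Rnum dmax m beta alpha gamma ds > 1"
  shows "ThetaEE dmax m beta alpha gamma ds = (THE T. T > 0 \<and> 1 = G (kappa alpha ds) T)"
  unfolding ThetaEE_def using assms by (simp only: if_P EEsum_G)

lemma ThetaEE_props:
  assumes ds: "1 \<le> ds" "ds \<le> dmax + 1" and R: "Rnum dmax m beta alpha gamma ds > 1"
  shows "ThetaEE dmax m beta alpha gamma ds > 0" "ThetaEE dmax m beta alpha gamma ds < 1"
    "G (kappa alpha ds) (ThetaEE dmax m beta alpha gamma ds) = 1"
proof -
  let ?k = "kappa alpha ds"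
  have kp: "\<forall>d\<in>{1..dmax}. 0 < ?k d" using kappa_pos by auto
  have G0: "G ?k 0 > 1" using R Rnum_G[OF ds] by simp
  have G1: "G ?k 1 < 1" using G_one[OF kp] .
  obtain T where T: "0 \<le> T" "T \<le> 1" "G ?k T = 1"
    using IVT2'[of "G ?k" 1 1 0] G0 G1 G_cont[OF kp] by auto
  have Tp: "T > 0" using T G0 by (cases "T = 0") auto
  have ex: "\<exists>!T. T > 0 \<and> 1 = G ?k T"
    using T Tp G_unique[OF kp] by (intro ex1I[of _ T]) auto
  have E: "ThetaEE dmax m beta alpha gamma ds = T"
    unfolding ThetaEE_alt[OF ds R]
    by (rule the1_equality[OF ex]) (use T Tp in auto)
  have "T < 1" using T G1 by (cases "T = 1") auto
  thus "ThetaEE dmax m beta alpha gamma ds > 0" "ThetaEE dmax m beta alpha gamma ds < 1"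
    "G ?k (ThetaEE dmax m beta alpha gamma ds) = 1" using E Tp T by auto
qed

lemma ThetaEE_nonpos:
  "Rnum dmax m beta alpha gamma ds \<le> 1 \<Longrightarrow> ThetaEE dmax m beta alpha gamma ds = 0"
  by (simp add: ThetaEE_def)

lemma ThetaEE_eqI:
  assumes ds: "1 \<le> ds" "ds \<le> dmax + 1" and T: "T > 0" "G (kappa alpha ds) T = 1"
  shows "Rnum dmax m beta alpha gamma ds > 1" "ThetaEE dmax m beta alpha gamma ds = T"
proof -
  have "G (kappa alpha ds) T < G (kappa alpha ds) 0"
    using T kappa_pos by (intro G_strict) auto
  thus R: "Rnum dmax m beta alpha gamma ds > 1" using T Rnum_G[OF ds] by simp
  show "ThetaEE dmax m beta alpha gamma ds = T"
    using G_unique[of "kappa alpha ds"] kappa_pos ThetaEE_props[OF ds R] T by auto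
qed

lemma Theta_Y: "Th (Y s t) = t * G s t"
  unfolding Theta_w G_def Y_def sum_distrib_left
  by (intro sum.cong) (auto simp: ac_simps)

lemma Y_box:
  assumes "\<forall>d\<in>{1..dmax}. 0 < s d" "t \<ge> 0"
  shows "Y s t \<in> box dmax"
proof -
  have "\<forall>d\<in>{1..dmax}. 0 \<le> Y s t d \<and> Y s t d \<le> 1"
  proof
    fix d assume d: "d \<in> {1..dmax}"
    have "s d * real d * t \<ge> 0" using assms d by (intro nn3) auto
    thus "0 \<le> Y s t d \<and> Y s t d \<le> 1" using d g0 by (auto simp: Y_def divide_simps)
  qed
  thus ?thesis by (auto simp: box_def Y_def)
qed

lemma Y_nz:
  assumes "\<forall>d\<in>{1..dmax}. 0 < s d" "t > 0"
  shows "Y s t \<noteq> (\<lambda>_. 0)"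
proof
  assume "Y s t = (\<lambda>_. 0)"
  hence "Y s t 1 = 0" by simp
  moreover have "s 1 * real 1 * t > 0" using assms dmax1 by auto
  ultimately show False using dmax1 g0 by (auto simp: Y_def)
qed

lemma eq_to_Y:
  assumes box: "y \<in> box dmax" and sp: "\<forall>d\<in>{1..dmax}. 0 < s d"
    and eq: "\<forall>d\<in>{1..dmax}. 0 = - gamma * y d + (1 - y d) * s d * real d * Th y"
    and nz: "y \<noteq> (\<lambda>_. 0)"
  shows "Th y > 0" "y = Y s (Th y)" "G s (Th y) = 1"
proof -
  have ge: "Th y \<ge> 0" unfolding Theta_w
  proof (intro sum_nonneg)
    fix d assume d: "d \<in> {1..dmax}"
    have b: "0 < beta d" using bb d by blast
    have "0 \<le> w d" "0 \<le> beta d" "0 \<le> y d" using w_pos[OF d] b d box by (auto simp: box_def)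
    thus "0 \<le> w d * beta d * y d" by simp
  qed
  have yY: "y d = Y s (Th y) d" for d
  proof (cases "d \<in> {1..dmax}")
    case True
    have c: "0 \<le> s d * real d * Th y" using sp True ge by (intro nn3) auto
    have "0 = - gamma * y d + (1 - y d) * (s d * real d * Th y)" using eq True by (simp add: ac_simps)
    hence "y d = s d * real d * Th y / (gamma + s d * real d * Th y)"
      using eq_solve[OF g0 c] by simp
    thus ?thesis using True by (simp add: Y_def)
  next
    case False thus ?thesis using box by (auto simp: box_def Y_def)
  qed
  hence Y: "y = Y s (Th y)" by auto
  show pos: "Th y > 0"
  proof (rule ccontr)
    assume "\<not> Th y > 0" hence "Th y = 0" using ge by simp
    hence "y = (\<lambda>_. 0)" using Y by (auto simp: Y_def)
    thus False using nz by simp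
  qed
  show "y = Y s (Th y)" by (rule Y)
  have "Th y = Th y * G s (Th y)" using Theta_Y[of s "Th y"] Y by simp
  thus "G s (Th y) = 1" using pos by simp
qed

lemma Y_eq:
  assumes sp: "\<forall>d\<in>{1..dmax}. 0 < s d" and t: "t > 0" "G s t = 1"
  shows "Th (Y s t) = t" "\<forall>d\<in>{1..dmax}. 0 = - gamma * Y s t d + (1 - Y s t d) * s d * real d * Th (Y s t)"
proof -
  show th: "Th (Y s t) = t" using Theta_Y t by simp
  show "\<forall>d\<in>{1..dmax}. 0 = - gamma * Y s t d + (1 - Y s t d) * s d * real d * Th (Y s t)"
  proof
    fix d assume d: "d \<in> {1..dmax}"
    have c: "0 \<le> s d * real d * t" using sp d t by (intro nn3) auto
    have yd: "Y s t d = s d * real d * t / (gamma + s d * real d * t)" using d by (simp add: Y_def)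
    have "0 = - gamma * Y s t d + (1 - Y s t d) * (s d * real d * t)"
      using eq_solve[OF g0 c, of "Y s t d"] yd by blast
    thus "0 = - gamma * Y s t d + (1 - Y s t d) * s d * real d * Th (Y s t)" using th by (simp add: ac_simps)
  qed
qed


lemma cons_pos: "cons s t \<Longrightarrow> \<forall>d\<in>{1..dmax}. 0 < s d"
  using a0 by (auto simp: cons_def)

lemma endemic_char:
  "endemic_eq dmax m beta alpha gamma cP L y \<longleftrightarrow> (\<exists>s t. t > 0 \<and> cons s t \<and> G s t = 1 \<and> y = Y s t)"
proof
  assume E: "endemic_eq dmax m beta alpha gamma cP L y"
  hence box: "y \<in> box dmax" and nz: "y \<noteq> (\<lambda>_. 0)" and
    ex: "\<forall>d\<in>{1..dmax}. \<exists>z. 0 \<le> z \<and> z \<le> 1 \<and>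
        (Th y < TH d \<longrightarrow> z = 1) \<and> (Th y > TH d \<longrightarrow> z = 0) \<and>
        0 = - gamma * y d + (1 - y d) * (z + alpha * (1 - z)) * real d * Th y"
    by (auto simp: endemic_eq_def sw_eq_def)
  from bchoice[OF ex] obtain z where z: "\<forall>d\<in>{1..dmax}. 0 \<le> z d \<and> z d \<le> 1 \<and>
        (Th y < TH d \<longrightarrow> z d = 1) \<and> (Th y > TH d \<longrightarrow> z d = 0) \<and>
        0 = - gamma * y d + (1 - y d) * (z d + alpha * (1 - z d)) * real d * Th y" by blast
  define s where "s = (\<lambda>d. z d + alpha * (1 - z d))"
  have srange: "alpha \<le> s d \<and> s d \<le> 1" if d: "d \<in> {1..dmax}" for d
  proof -
    have "0 \<le> z d" "z d \<le> 1" using z d by auto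
    hence "0 \<le> z d * (1 - alpha)" "z d * (1 - alpha) \<le> 1 - alpha" using a1
      by (auto intro: mult_left_le_one_le)
    thus ?thesis unfolding s_def by (simp add: algebra_simps)
  qed
  have sp: "\<forall>d\<in>{1..dmax}. 0 < s d" using srange a0 by force
  have eq: "\<forall>d\<in>{1..dmax}. 0 = - gamma * y d + (1 - y d) * s d * real d * Th y"
    using z by (simp add: s_def)
  note R = eq_to_Y[OF box sp eq nz]
  have "cons s (Th y)" unfolding cons_def using srange z by (auto simp: s_def)
  thus "\<exists>s t. t > 0 \<and> cons s t \<and> G s t = 1 \<and> y = Y s t" using R by blast
next
  assume "\<exists>s t. t > 0 \<and> cons s t \<and> G s t = 1 \<and> y = Y s t"
  then obtain s t where t: "t > 0" and c: "cons s t" and G: "G s t = 1" and y: "y = Y s t" by blast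
  have sp: "\<forall>d\<in>{1..dmax}. 0 < s d" using cons_pos[OF c] .
  note YE = Y_eq[OF sp t G]
  have box: "y \<in> box dmax" using Y_box[OF sp] t y by simp
  have nz: "y \<noteq> (\<lambda>_. 0)" using Y_nz[OF sp t(1)] y by simp
  have "\<exists>z. 0 \<le> z \<and> z \<le> 1 \<and>
        (Th y < TH d \<longrightarrow> z = 1) \<and> (Th y > TH d \<longrightarrow> z = 0) \<and>
        0 = - gamma * y d + (1 - y d) * (z + alpha * (1 - z)) * real d * Th y"
    if d: "d \<in> {1..dmax}" for d
  proof (intro exI conjI)
    let ?z = "(s d - alpha) / (1 - alpha)"
    have cd: "alpha \<le> s d" "s d \<le> 1" "t < TH d \<longrightarrow> s d = 1" "t > TH d \<longrightarrow> s d = alpha"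
      using c d by (auto simp: cons_def)
    have z1: "?z * (1 - alpha) = s d - alpha" using a1 by simp
    have "?z + alpha * (1 - ?z) = ?z * (1 - alpha) + alpha" by (simp only: algebra_simps)
    hence zz: "?z + alpha * (1 - ?z) = s d" using z1 by simp
    show "0 \<le> ?z" "?z \<le> 1" using cd a1 by (auto simp: divide_simps)
    show "Th y < TH d \<longrightarrow> ?z = 1" "Th y > TH d \<longrightarrow> ?z = 0"
      using cd a1 YE y by auto
    show "0 = - gamma * y d + (1 - y d) * (?z + alpha * (1 - ?z)) * real d * Th y"
      using YE d y zz by simp
  qed
  thus "endemic_eq dmax m beta alpha gamma cP L y"
    using box nz by (auto simp: endemic_eq_def sw_eq_def)
qed

lemma theta_unique_aux:
  assumes c: "cons s t" "cons s' t'" and t: "0 < t" "t < t'" and G: "G s t = 1" "G s' t' = 1"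
  shows False
proof -
  have "\<forall>d\<in>{1..dmax}. 0 < s' d \<and> s' d \<le> s d"
  proof
    fix d assume d: "d \<in> {1..dmax}"
    have "s' d \<le> s d"
    proof (cases "t < TH d")
      case True thus ?thesis using c d by (auto simp: cons_def)
    next
      case False hence "t' > TH d" using t by simp
      thus ?thesis using c d by (auto simp: cons_def)
    qed
    thus "0 < s' d \<and> s' d \<le> s d" using cons_pos[OF c(2)] d by auto
  qed
  hence "G s' t' < G s t" using t by (intro G_strict) auto
  thus False using G by simp
qed

lemma theta_unique:
  assumes "cons s t" "cons s' t'" "0 < t" "0 < t'" "G s t = 1" "G s' t' = 1"
  shows "t = t'"
  using theta_unique_aux[of s t s' t'] theta_unique_aux[of s' t' s t] assms
  by (cases t t' rule: linorder_cases) auto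


lemma Theta_zero: "Th (\<lambda>_. 0) = 0" by (simp add: Theta_w)

lemma part1:
  assumes R: "Rnum dmax m beta alpha gamma (dmax + 1) \<le> 1"
  shows "sw_eq dmax m beta alpha gamma cP L y \<longleftrightarrow> y = (\<lambda>_. 0)"
proof
  assume sw: "sw_eq dmax m beta alpha gamma cP L y"
  show "y = (\<lambda>_. 0)"
  proof (rule ccontr)
    assume "y \<noteq> (\<lambda>_. 0)"
    hence "endemic_eq dmax m beta alpha gamma cP L y" using sw by (simp add: endemic_eq_def)
    then obtain s t where st: "t > 0" "cons s t" "G s t = 1" "y = Y s t"
      using endemic_char by blast
    have "\<forall>d\<in>{1..dmax}. 0 < s d \<and> s d \<le> kappa alpha (dmax + 1) d"
      using st(2) a0 by (auto simp: cons_def kappa_def)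
    hence "G s t < G (kappa alpha (dmax + 1)) 0" using st by (intro G_strict) auto
    also have "\<dots> = Rnum dmax m beta alpha gamma (dmax + 1)" using Rnum_G[of "dmax+1"] by simp
    finally show False using R st by simp
  qed
next
  assume y: "y = (\<lambda>_. 0)"
  have "\<forall>d\<in>{1..dmax}. \<exists>z. 0 \<le> z \<and> z \<le> 1 \<and>
        (Th y < TH d \<longrightarrow> z = 1) \<and> (Th y > TH d \<longrightarrow> z = 0) \<and>
        0 = - gamma * y d + (1 - y d) * (z + alpha * (1 - z)) * real d * Th y"
  proof
    fix d assume d: "d \<in> {1..dmax}"
    show "\<exists>z. 0 \<le> z \<and> z \<le> 1 \<and>
        (Th y < TH d \<longrightarrow> z = 1) \<and> (Th y > TH d \<longrightarrow> z = 0) \<and>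
        0 = - gamma * y d + (1 - y d) * (z + alpha * (1 - z)) * real d * Th y"
      using th_nonneg[of d] y Theta_zero by (intro exI[of _ 1]) auto
  qed
  moreover have "y \<in> box dmax" using y by (simp add: box_def)
  ultimately show "sw_eq dmax m beta alpha gamma cP L y" by (simp add: sw_eq_def)
qed

lemma deq_props:
  assumes R: "Rnum dmax m beta alpha gamma (dmax + 1) > 1"
  defines "de \<equiv> deq dmax m beta alpha gamma cP L"
  shows "dmin dmax alpha cP L \<le> de" "de \<le> dmax + 1"
    "ThetaEE dmax m beta alpha gamma de > TH de"
    "\<And>d. dmin dmax alpha cP L \<le> d \<Longrightarrow> d < de \<Longrightarrow> \<not> ThetaEE dmax m beta alpha gamma d > TH d"
proof -
  let ?P = "\<lambda>d. dmin dmax alpha cP L \<le> d \<and> d \<le> dmax + 1 \<and>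
        ThetaEE dmax m beta alpha gamma d > TH d"
  have "?P (dmax + 1)"
    using dmin_props(1) ThetaEE_props(1)[of "dmax+1", OF _ _ R] by (auto simp: th_def)
  hence ex: "\<exists>d. ?P d" by blast
  from LeastI_ex[OF ex] show "dmin dmax alpha cP L \<le> de" "de \<le> dmax + 1"
    "ThetaEE dmax m beta alpha gamma de > TH de"
    by (auto simp: de_def deq_def)
  fix d assume "dmin dmax alpha cP L \<le> d" "d < de"
  with not_less_Least[of d ?P] LeastI_ex[OF ex] show "\<not> ThetaEE dmax m beta alpha gamma d > TH d"
    by (auto simp: de_def deq_def)
qed

lemma fixed_char:
  assumes ds: "1 \<le> ds" "ds \<le> dmax + 1" and R: "Rnum dmax m beta alpha gamma ds > 1"
  shows "(fixed_eq dmax m beta alpha gamma ds y \<and> y \<noteq> (\<lambda>_. 0)) \<longleftrightarrow>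
     y = Y (kappa alpha ds) (ThetaEE dmax m beta alpha gamma ds)"
proof -
  have kp: "\<forall>d\<in>{1..dmax}. 0 < kappa alpha ds d" using kappa_pos by auto
  note TP = ThetaEE_props[OF ds R]
  show ?thesis
  proof
    assume "fixed_eq dmax m beta alpha gamma ds y \<and> y \<noteq> (\<lambda>_. 0)"
    hence box: "y \<in> box dmax" and eq: "\<forall>d\<in>{1..dmax}. 0 = - gamma * y d + (1 - y d) * kappa alpha ds d * real d * Th y"
      and nz: "y \<noteq> (\<lambda>_. 0)" by (auto simp: fixed_eq_def)
    note E = eq_to_Y[OF box kp eq nz]
    have "ThetaEE dmax m beta alpha gamma ds = Th y" using ThetaEE_eqI(2)[OF ds E(1) E(3)] .
    thus "y = Y (kappa alpha ds) (ThetaEE dmax m beta alpha gamma ds)" using E by simp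
  next
    assume y: "y = Y (kappa alpha ds) (ThetaEE dmax m beta alpha gamma ds)"
    note YE = Y_eq[OF kp TP(1) TP(3)]
    show "fixed_eq dmax m beta alpha gamma ds y \<and> y \<noteq> (\<lambda>_. 0)"
      using Y_box[OF kp] Y_nz[OF kp TP(1)] TP YE y by (auto simp: fixed_eq_def)
  qed
qed

lemma yEE_eq:
  assumes ds: "1 \<le> ds" "ds \<le> dmax + 1" and R: "Rnum dmax m beta alpha gamma ds > 1"
  shows "yEE dmax m beta alpha gamma ds = Y (kappa alpha ds) (ThetaEE dmax m beta alpha gamma ds)"
  unfolding yEE_def using fixed_char[OF ds R] by (intro the_equality) auto


lemma part2a:
  assumes R: "Rnum dmax m beta alpha gamma (dmax + 1) > 1"
    and de: "de = deq dmax m beta alpha gamma cP L"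
    and I: "ThetaEE dmax m beta alpha gamma de \<in> Ival dmax alpha cP L de"
  shows "endemic_eq dmax m beta alpha gamma cP L y \<longleftrightarrow> y = yEE dmax m beta alpha gamma de"
proof -
  note DP = deq_props[OF R, folded de]
  define T where "T = ThetaEE dmax m beta alpha gamma de"
  let ?k = "kappa alpha de"
  have de1: "1 \<le> de" using DP(1) dmin_props(1) by auto
  have Rde: "Rnum dmax m beta alpha gamma de > 1"
  proof (rule ccontr)
    assume "\<not> ?thesis"
    hence "ThetaEE dmax m beta alpha gamma de = 0" by (simp add: ThetaEE_nonpos)
    thus False using DP(3) th_nonneg[of de] by simp
  qed
  note TP = ThetaEE_props[OF de1 DP(2) Rde, folded T_def]
  have I': "T \<in> Ival dmax alpha cP L de" using I T_def by simp
  have rel: "(d < de \<longrightarrow> T < TH d) \<and> (de \<le> d \<longrightarrow> TH d < T)" if d: "d \<in> {1..dmax}" for d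
  proof (intro conjI impI)
    assume "de \<le> d"
    hence "TH d \<le> TH de" using de1 d by (intro th_mono) auto
    thus "TH d < T" using DP(3) T_def by simp
  next
    assume dl: "d < de"
    show "T < TH d"
    proof (cases "de = dmax + 1")
      case True
      hence "T < TH dmax" using I' by (simp add: Ival_def)
      moreover have "TH dmax \<le> TH d" using d by (intro th_mono) auto
      ultimately show ?thesis by simp
    next
      case F: False
      show ?thesis
      proof (cases "de = dmin dmax alpha cP L")
        case True
        hence "TH d \<ge> 1" using dl d dmin_props(3) by auto
        thus ?thesis using TP by simp
      next
        case False
        hence "T < TH (de - 1)" using I' F by (simp add: Ival_def)
        moreover have "TH (de - 1) \<le> TH d" using d dl DP(2) by (intro th_mono) auto
        ultimately show ?thesis by simp
      qed
    qed
  qed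
  have ck: "cons ?k T" unfolding cons_def
  proof
    fix d assume d: "d \<in> {1..dmax}"
    show "alpha \<le> ?k d \<and> ?k d \<le> 1 \<and> (T < TH d \<longrightarrow> ?k d = 1) \<and> (TH d < T \<longrightarrow> ?k d = alpha)"
      using rel[OF d] a1 by (cases "d < de") (auto simp: kappa_def)
  qed
  have yE: "yEE dmax m beta alpha gamma de = Y ?k T"
    using yEE_eq[OF de1 DP(2) Rde] T_def by simp
  show ?thesis
  proof
    assume "endemic_eq dmax m beta alpha gamma cP L y"
    then obtain s t where st: "t > 0" "cons s t" "G s t = 1" "y = Y s t"
      using endemic_char by blast
    have tT: "t = T" using theta_unique[OF st(2) ck st(1) TP(1) st(3) TP(3)] .
    have "s d = ?k d" if d: "d \<in> {1..dmax}" for d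
      using rel[OF d] st(2) d tT by (auto simp: cons_def kappa_def)
    hence "Y s t = Y ?k T" using tT by (auto simp: Y_def)
    thus "y = yEE dmax m beta alpha gamma de" using st yE by simp
  next
    assume "y = yEE dmax m beta alpha gamma de"
    thus "endemic_eq dmax m beta alpha gamma cP L y"
      using endemic_char ck TP yE by blast
  qed
qed


lemma part2b:
  assumes R: "Rnum dmax m beta alpha gamma (dmax + 1) > 1"
    and de: "de = deq dmax m beta alpha gamma cP L"
    and lt: "dmin dmax alpha cP L < de"
    and TT: "ThetaEE dmax m beta alpha gamma de \<ge> TH (de - 1)"
  shows "(\<exists>!y. endemic_eq dmax m beta alpha gamma cP L y)
       \<and> (\<forall>y. endemic_eq dmax m beta alpha gamma cP L y \<longrightarrow>
             Th y = TH (de - 1) \<and>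
             (\<exists>zb. 0 \<le> zb \<and> zb \<le> 1 \<and>
                (\<forall>d\<in>{1..dmax}.
                   (let s = (if d < de - 1 then 1 else if d > de - 1 then alpha
                             else zb + alpha * (1 - zb))
                    in y d = s * real d * TH (de - 1) / (gamma + s * real d * TH (de - 1))))))"
proof -
  note DP = deq_props[OF R, folded de]
  define k where "k = de - 1"
  define t0 where "t0 = TH k"
  define T where "T = ThetaEE dmax m beta alpha gamma de"
  have kD: "k \<in> {1..dmax}" using lt DP(2) dmin_props(1) by (auto simp: k_def)
  have dek: "de = k + 1" using lt k_def by auto
  have de1: "1 \<le> de" using dek by simp
  have t0p: "t0 > 0" using th_pos[OF kD] t0_def by simp
  have Rde: "Rnum dmax m beta alpha gamma de > 1"
  proof (rule ccontr)
    assume "\<not> ?thesis"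
    hence "ThetaEE dmax m beta alpha gamma de = 0" by (simp add: ThetaEE_nonpos)
    thus False using DP(3) th_nonneg[of de] by simp
  qed
  note TP = ThetaEE_props[OF de1 DP(2) Rde, folded T_def]
  have Tt0: "t0 \<le> T" using TT T_def t0_def k_def by simp
  have G1: "G (kappa alpha de) t0 \<ge> 1"
    using G_mono[of "kappa alpha de" "kappa alpha de" t0 T] kappa_pos t0p Tt0 TP by auto
  have G0: "G (kappa alpha k) t0 \<le> 1"
  proof -
    have k1: "1 \<le> k" "k \<le> dmax + 1" using kD by auto
    have nk: "\<not> ThetaEE dmax m beta alpha gamma k > TH k"
    proof -
      have "dmin dmax alpha cP L \<le> k" "k < de" using lt dek by linarith+
      thus ?thesis using DP(4)[of k] by blast
    qed
    show ?thesis
    proof (cases "Rnum dmax m beta alpha gamma k > 1")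
      case True
      note KP = ThetaEE_props[OF k1 True]
      have "G (kappa alpha k) t0 \<le> G (kappa alpha k) (ThetaEE dmax m beta alpha gamma k)"
        using nk KP kappa_pos t0_def by (intro G_mono) auto
      thus ?thesis using KP by simp
    next
      case False
      have "G (kappa alpha k) t0 < G (kappa alpha k) 0"
        using kappa_pos t0p by (intro G_strict) auto
      thus ?thesis using False Rnum_G[OF k1] by simp
    qed
  qed
  define a where "a = (\<lambda>d. if d < k then 1 else alpha)"
  define b where "b = (\<lambda>d. if d = k then 1 - alpha else 0)"
  define sz where "sz = (\<lambda>z d. a d + b d * z)"
  have szpos: "\<forall>d\<in>{1..dmax}. 0 < sz z d" if "0 \<le> z" for z
    using that a0 a1 by (auto simp: sz_def a_def b_def intro: add_pos_nonneg)
  have sz0: "sz 0 = kappa alpha k" by (auto simp: sz_def a_def b_def kappa_def)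
  have sz1: "sz 1 = kappa alpha de" by (auto simp: sz_def a_def b_def kappa_def dek)
  have cont: "continuous_on {0..1} (\<lambda>z. G (sz z) t0)"
    unfolding G_def sz_def
    apply (intro continuous_intros)
    apply (auto simp del: of_nat_Suc)
  proof -
    fix d x assume h: "Suc 0 \<le> d" "d \<le> dmax" "gamma + (a d + b d * x) * real d * t0 = 0" "0 \<le> x"
    have "0 < sz x d" using szpos[OF h(4)] h by auto
    hence "0 \<le> sz x d * real d * t0" using t0p by (intro nn3) auto
    thus False using g0 h by (simp add: sz_def)
  qed
  obtain zb where zb: "0 \<le> zb" "zb \<le> 1" "G (sz zb) t0 = 1"
    using IVT'[of "\<lambda>z. G (sz z) t0" 0 1 1] G0 G1 sz0 sz1 cont by auto
  have czb: "cons (sz zb) t0" unfolding cons_def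
  proof
    fix d assume d: "d \<in> {1..dmax}"
    have r1: "t0 < TH d \<Longrightarrow> d < k"
    proof (rule ccontr)
      assume "t0 < TH d" "\<not> d < k"
      moreover have "TH d \<le> TH k" using \<open>\<not> d < k\<close> kD d by (intro th_mono) auto
      ultimately show False using t0_def by simp
    qed
    have r2: "t0 > TH d \<Longrightarrow> d > k"
    proof (rule ccontr)
      assume "t0 > TH d" "\<not> d > k"
      moreover have "TH k \<le> TH d" using \<open>\<not> d > k\<close> kD d by (intro th_mono) auto
      ultimately show False using t0_def by simp
    qed
    have "zb * (1 - alpha) \<le> 1 - alpha" using zb a1 by (intro mult_left_le_one_le) auto
    moreover have "0 \<le> zb * (1 - alpha)" using zb a1 by simp
    ultimately show "alpha \<le> sz zb d \<and> sz zb d \<le> 1 \<and> (t0 < TH d \<longrightarrow> sz zb d = 1) \<and> (t0 > TH d \<longrightarrow> sz zb d = alpha)"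
      using r1 r2 a1 by (auto simp: sz_def a_def b_def algebra_simps)
  qed
  define y0 where "y0 = Y (sz zb) t0"
  have y0E: "endemic_eq dmax m beta alpha gamma cP L y0"
    using endemic_char czb zb t0p y0_def by blast
  have desc: "Th y = t0 \<and> (\<exists>s. y = Y s t0 \<and> alpha \<le> s k \<and> s k \<le> 1 \<and>
      (\<forall>d\<in>{1..dmax}. d \<noteq> k \<longrightarrow> s d = (if d < k then 1 else alpha)))"
    if E: "endemic_eq dmax m beta alpha gamma cP L y" for y
  proof -
    obtain s t where st: "t > 0" "cons s t" "G s t = 1" "y = Y s t"
      using E endemic_char by blast
    have tt: "t = t0" using theta_unique[OF st(2) czb st(1) t0p st(3) zb(3)] .
    have "Th y = t0" using Y_eq(1)[OF cons_pos[OF st(2)] st(1) st(3)] st tt by simp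
    moreover have "s d = (if d < k then 1 else alpha)" if d: "d \<in> {1..dmax}" "d \<noteq> k" for d
    proof (cases "d < k")
      case True
      have "TH k < TH d" using True d by (intro th_strict) (use kD in auto)
      thus ?thesis using st(2) d True tt t0_def by (auto simp: cons_def)
    next
      case False hence dk: "k < d" using d by simp
      have "TH d < TH k" using dk d kD by (intro th_strict) auto
      thus ?thesis using st(2) d False tt t0_def by (auto simp: cons_def)
    qed
    moreover have "alpha \<le> s k \<and> s k \<le> 1" using st(2) kD by (auto simp: cons_def)
    ultimately show ?thesis using st tt by blast
  qed
  have uniq: "y1 = y2" if E1: "endemic_eq dmax m beta alpha gamma cP L y1"
    and E2: "endemic_eq dmax m beta alpha gamma cP L y2" for y1 y2
  proof -
    obtain s1 where s1: "y1 = Y s1 t0" "\<forall>d\<in>{1..dmax}. d \<noteq> k \<longrightarrow> s1 d = (if d < k then 1 else alpha)"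
      and th1: "Th y1 = t0" using desc[OF E1] by blast
    obtain s2 where s2: "y2 = Y s2 t0" "\<forall>d\<in>{1..dmax}. d \<noteq> k \<longrightarrow> s2 d = (if d < k then 1 else alpha)"
      and th2: "Th y2 = t0" using desc[OF E2] by blast
    have ne: "y1 d = y2 d" if "d \<noteq> k" for d
      using s1 s2 that by (auto simp: Y_def)
    have "Th y1 = w k * beta k * y1 k + (\<Sum>d\<in>{1..dmax} - {k}. w d * beta d * y1 d)"
      unfolding Theta_w using kD by (simp add: sum.remove)
    moreover have "Th y2 = w k * beta k * y2 k + (\<Sum>d\<in>{1..dmax} - {k}. w d * beta d * y2 d)"
      unfolding Theta_w using kD by (simp add: sum.remove)
    moreover have "(\<Sum>d\<in>{1..dmax} - {k}. w d * beta d * y1 d) = (\<Sum>d\<in>{1..dmax} - {k}. w d * beta d * y2 d)"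
      using ne by (intro sum.cong) auto
    ultimately have "w k * beta k * y1 k = w k * beta k * y2 k" using th1 th2 by simp
    moreover have "w k * beta k \<noteq> 0"
    proof -
      have "0 < beta k" using bb kD by blast
      thus ?thesis using w_pos[OF kD] by simp
    qed
    ultimately have "y1 k = y2 k" by simp
    hence "y1 d = y2 d" for d using ne by (cases "d = k") auto
    thus ?thesis by (rule ext)
  qed
  have part1: "\<exists>!y. endemic_eq dmax m beta alpha gamma cP L y"
    using y0E uniq by blast
  have part2: "Th y = TH (de - 1) \<and>
             (\<exists>zb. 0 \<le> zb \<and> zb \<le> 1 \<and>
                (\<forall>d\<in>{1..dmax}.
                   (let s = (if d < de - 1 then 1 else if d > de - 1 then alpha
                             else zb + alpha * (1 - zb))
                    in y d = s * real d * TH (de - 1) / (gamma + s * real d * TH (de - 1)))))"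
    if E: "endemic_eq dmax m beta alpha gamma cP L y" for y
  proof -
    obtain s where s: "y = Y s t0" "alpha \<le> s k" "s k \<le> 1"
      "\<forall>d\<in>{1..dmax}. d \<noteq> k \<longrightarrow> s d = (if d < k then 1 else alpha)"
      and th: "Th y = t0" using desc[OF E] by blast
    define z where "z = (s k - alpha) / (1 - alpha)"
    have z1: "z * (1 - alpha) = s k - alpha" using a1 z_def by simp
    have "z + alpha * (1 - z) = z * (1 - alpha) + alpha" by (simp only: algebra_simps)
    hence zz: "z + alpha * (1 - z) = s k" using z1 by simp
    have zr: "0 \<le> z" "z \<le> 1" using s a1 unfolding z_def by (auto simp: divide_simps)
    have "\<forall>d\<in>{1..dmax}.
                   (let s = (if d < k then 1 else if d > k then alpha
                             else z + alpha * (1 - z))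
                    in y d = s * real d * t0 / (gamma + s * real d * t0))"
    proof
      fix d assume d: "d \<in> {1..dmax}"
      have "(if d < k then 1 else if d > k then alpha else z + alpha * (1 - z)) = s d"
        using s(4) d zz by auto
      thus "let s = (if d < k then 1 else if d > k then alpha
                             else z + alpha * (1 - z))
                    in y d = s * real d * t0 / (gamma + s * real d * t0)"
        using s(1) d by (simp add: Y_def Let_def)
    qed
    thus ?thesis using th zr unfolding k_def t0_def by blast
  qed
  show ?thesis using part1 part2 by blast
qed

end
theorem theorem1:
  fixes dmax :: nat and m beta :: "nat \<Rightarrow> real" and alpha gamma cP L :: real
  assumes "dmax \<ge> 1"
    and "\<forall>d\<in>{1..dmax}. m d > 0"
    and "(\<Sum>d=1..dmax. m d) = 1"
    and "0 < alpha" "alpha < 1" "0 < gamma" "gamma < 1"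
    and "\<forall>d\<in>{1..dmax}. 0 < beta d \<and> beta d < 1"
    and "cP > 0" "L > 0"
    and "\<exists>d\<in>{1..dmax}. th dmax alpha cP L d < 1"
  shows
    "(Rnum dmax m beta alpha gamma (dmax + 1) \<le> 1 \<longrightarrow>
        (\<forall>y. sw_eq dmax m beta alpha gamma cP L y \<longleftrightarrow> y = (\<lambda>_. 0)))
   \<and> (Rnum dmax m beta alpha gamma (dmax + 1) > 1 \<longrightarrow>
        (let de = deq dmax m beta alpha gamma cP L;
             T = ThetaEE dmax m beta alpha gamma de;
             Tth = th dmax alpha cP L (de - 1)
         in (T \<in> Ival dmax alpha cP L de \<longrightarrow>
               (\<forall>y. endemic_eq dmax m beta alpha gamma cP L y \<longleftrightarrow>
                    y = yEE dmax m beta alpha gamma de))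
          \<and> (dmin dmax alpha cP L < de \<and> T \<ge> Tth \<longrightarrow>
               (\<exists>!y. endemic_eq dmax m beta alpha gamma cP L y)
             \<and> (\<forall>y. endemic_eq dmax m beta alpha gamma cP L y \<longrightarrow>
                   Theta dmax m beta y = Tth \<and>
                   (\<exists>zb. 0 \<le> zb \<and> zb \<le> 1 \<and>
                      (\<forall>d\<in>{1..dmax}.
                         (let s = (if d < de - 1 then 1 else if d > de - 1 then alpha
                                   else zb + alpha * (1 - zb))
                          in y d = s * real d * Tth / (gamma + s * real d * Tth))))))))"
proof -
  interpret SIS dmax m beta alpha gamma cP L using assms by unfold_locales auto
  show ?thesis
  proof (intro conjI impI)
    assume "Rnum dmax m beta alpha gamma (dmax + 1) \<le> 1"
    thus "\<forall>y. sw_eq dmax m beta alpha gamma cP L y = (y = (\<lambda>_. 0))" using part1 by blast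
  next
    assume R: "Rnum dmax m beta alpha gamma (dmax + 1) > 1"
    note A = part2a[OF R refl]
    note B = part2b[OF R refl, unfolded Let_def]
    show "let de = deq dmax m beta alpha gamma cP L;
             T = ThetaEE dmax m beta alpha gamma de;
             Tth = th dmax alpha cP L (de - 1)
         in (T \<in> Ival dmax alpha cP L de \<longrightarrow>
               (\<forall>y. endemic_eq dmax m beta alpha gamma cP L y \<longleftrightarrow>
                    y = yEE dmax m beta alpha gamma de))
          \<and> (dmin dmax alpha cP L < de \<and> T \<ge> Tth \<longrightarrow>
               (\<exists>!y. endemic_eq dmax m beta alpha gamma cP L y)
             \<and> (\<forall>y. endemic_eq dmax m beta alpha gamma cP L y \<longrightarrow>
                   Theta dmax m beta y = Tth \<and>
                   (\<exists>zb. 0 \<le> zb \<and> zb \<le> 1 \<and>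
                      (\<forall>d\<in>{1..dmax}.
                         (let s = (if d < de - 1 then 1 else if d > de - 1 then alpha
                                   else zb + alpha * (1 - zb))
                          in y d = s * real d * Tth / (gamma + s * real d * Tth))))))"
      unfolding Let_def
    proof (intro conjI impI)
      assume I: "ThetaEE dmax m beta alpha gamma (deq dmax m beta alpha gamma cP L)
               \<in> Ival dmax alpha cP L (deq dmax m beta alpha gamma cP L)"
      show "\<forall>y. endemic_eq dmax m beta alpha gamma cP L y = (y = yEE dmax m beta alpha gamma (deq dmax m beta alpha gamma cP L))"
        using A[OF I] by blast
    next
      assume h: "dmin dmax alpha cP L < deq dmax m beta alpha gamma cP L \<and>
       th dmax alpha cP L (deq dmax m beta alpha gamma cP L - 1)
       \<le> ThetaEE dmax m beta alpha gamma (deq dmax m beta alpha gamma cP L)"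
      note P = B[OF conjunct1[OF h] conjunct2[OF h]]
      show "\<exists>!y. endemic_eq dmax m beta alpha gamma cP L y" using P by blast
      show "\<forall>y. endemic_eq dmax m beta alpha gamma cP L y \<longrightarrow>
        Theta dmax m beta y = th dmax alpha cP L (deq dmax m beta alpha gamma cP L - 1) \<and>
        (\<exists>zb. 0 \<le> zb \<and> zb \<le> 1 \<and>
          (\<forall>d\<in>{1..dmax}.
              y d = (if d < deq dmax m beta alpha gamma cP L - 1 then 1
                     else if deq dmax m beta alpha gamma cP L - 1 < d then alpha else zb + alpha * (1 - zb)) *
                    real d * th dmax alpha cP L (deq dmax m beta alpha gamma cP L - 1) /
                    (gamma + (if d < deq dmax m beta alpha gamma cP L - 1 then 1
                     else if deq dmax m beta alpha gamma cP L - 1 < d then alpha else zb + alpha * (1 - zb)) *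
                    real d * th dmax alpha cP L (deq dmax m beta alpha gamma cP L - 1))))"
        using P by blast
    qed
  qed
qed

end
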